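(* Let $\theta$ be an ordered partial action of a groupoid $\mathcal{G}$ on a semilatticeoid $X$. Then the semidirect product $\mathcal{G}\ltimes_\theta X$ is an $E$-unitary inverse semigroupoid.
   Context: Inverse semigroupoid: arrows $\mathcal{S}$, objects $\mathcal{S}^{(0)}$, maps $d,c$, associative multiplication on $\mathcal{S}^{(2)}=\{(s,t):d(s)=c(t)\}$ with $d(st)=d(t)$, $c(st)=c(s)$, unique $s^*$ with $ss^*s=s$, $s^*ss^*=s^*$; natural order on parallel arrows $s\leqslant t$ iff $s=te$ for an idempotent $e$; $(s,t)\in\sigma$ iff some $r\leqslant s,t$; $E$-unitary: $(s,e)\in\sigma$, $e$ idempotent imply $s$ idempotent. A groupoid is an inverse semigroupoid with exactly one idempotent over each object. A semilatticeoid is an inverse semigroupoid all of whose elements are idempotent, with its natural order. A partial action of $\mathcal{G}$ on $X$ is a pair $(\{X_g\},\{\theta_g\})$, $X_g\subseteq X$, $\theta_g:X_{g^{*}}\to X_g$ bijections with $\theta_g^{-1}=\theta_{g^*}$, $X=\bigcup X_g$, $\theta_g\circ\theta_h\subseteq\theta_{gh}$ for composable $(g,h)$, $X_g\subseteq X_h$ if $g\leqslant h$; ordered if each $X_g$ is an order ideal and each $\theta_g$ an order isomorphism; assume $X_g\ne\emptyset$. Semidirect product: $\mathcal{G}\ltimes_\theta X=\{(g,x): x\in X_{g^*}\}$ with objects $\mathcal{G}^{(0)}\times X^{(0)}$, $d(g,x)=(d(g),d(x))$, $c(g,x)=(c(g),c(\theta_g(x)))$, product $(g,x)(h,y)=(gh,\theta_{h^*}(x\theta_h(y)))$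 defined when $(g,h)$ composable and $(x,\theta_h(y))\in X^{(2)}$. *)

theory Defs
  imports Main
begin

record ('a, 'o) sgd =
  arr  :: "'a set"
  obj  :: "'o set"
  sdom :: "'a \<Rightarrow> 'o"
  scod :: "'a \<Rightarrow> 'o"
  smul :: "'a \<Rightarrow> 'a \<Rightarrow> 'a"

definition composable :: "('a, 'o) sgd \<Rightarrow> 'a \<Rightarrow> 'a \<Rightarrow> bool" where
  "composable S s t \<longleftrightarrow> s \<in> arr S \<and> t \<in> arr S \<and> sdom S s = scod S t"

definition semigroupoid :: "('a, 'o) sgd \<Rightarrow> bool" where
  "semigroupoid S \<longleftrightarrow>
     (\<forall>s\<in>arr S. sdom S s \<in> obj S \<and> scod S s \<in> obj S) \<and>
     (\<forall>s t. composable S s t \<longrightarrow>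
        smul S s t \<in> arr S \<and> sdom S (smul S s t) = sdom S t \<and> scod S (smul S s t) = scod S s) \<and>
     (\<forall>s t u. composable S s t \<and> composable S t u \<longrightarrow>
        smul S (smul S s t) u = smul S s (smul S t u))"

definition is_inv :: "('a, 'o) sgd \<Rightarrow> 'a \<Rightarrow> 'a \<Rightarrow> bool" where
  "is_inv S s t \<longleftrightarrow> t \<in> arr S \<and> sdom S s = scod S t \<and> sdom S t = scod S s \<and>
     smul S (smul S s t) s = s \<and> smul S (smul S t s) t = t"

definition inverse_semigroupoid :: "('a, 'o) sgd \<Rightarrow> bool" where
  "inverse_semigroupoid S \<longleftrightarrow> semigroupoid S \<and> (\<forall>s\<in>arr S. \<exists>!t. is_inv S s t)"

definition sinv :: "('a, 'o) sgd \<Rightarrow> 'a \<Rightarrow> 'a" where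
  "sinv S s = (THE t. is_inv S s t)"

definition idem :: "('a, 'o) sgd \<Rightarrow> 'a \<Rightarrow> bool" where
  "idem S e \<longleftrightarrow> e \<in> arr S \<and> sdom S e = scod S e \<and> smul S e e = e"

definition nat_le :: "('a, 'o) sgd \<Rightarrow> 'a \<Rightarrow> 'a \<Rightarrow> bool" where
  "nat_le S s t \<longleftrightarrow> s \<in> arr S \<and> t \<in> arr S \<and> sdom S s = sdom S t \<and> scod S s = scod S t \<and>
     (\<exists>e. idem S e \<and> composable S t e \<and> s = smul S t e)"

definition sigma_rel :: "('a, 'o) sgd \<Rightarrow> 'a \<Rightarrow> 'a \<Rightarrow> bool" where
  "sigma_rel S s t \<longleftrightarrow> (\<exists>r. nat_le S r s \<and> nat_le S r t)"

definition E_unitary :: "('a, 'o) sgd \<Rightarrow> bool" where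
  "E_unitary S \<longleftrightarrow> (\<forall>s e. s \<in> arr S \<and> idem S e \<and> sigma_rel S s e \<longrightarrow> idem S s)"

definition groupoid :: "('a, 'o) sgd \<Rightarrow> bool" where
  "groupoid S \<longleftrightarrow> inverse_semigroupoid S \<and> (\<forall>x\<in>obj S. \<exists>!e. idem S e \<and> sdom S e = x)"

definition semilatticeoid :: "('a, 'o) sgd \<Rightarrow> bool" where
  "semilatticeoid S \<longleftrightarrow> inverse_semigroupoid S \<and> (\<forall>s\<in>arr S. idem S s)"

text \<open>Partial action (Xd, th) of G on X: Xd g is the domain X_g, th g is theta_g.\<close>
definition partial_action ::
  "('g, 'go) sgd \<Rightarrow> ('x, 'xo) sgd \<Rightarrow> ('g \<Rightarrow> 'x set) \<Rightarrow> ('g \<Rightarrow> 'x \<Rightarrow> 'x) \<Rightarrow> bool" where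
  "partial_action G X Xd th \<longleftrightarrow>
     (\<forall>g\<in>arr G. Xd g \<subseteq> arr X \<and> Xd g \<noteq> {}) \<and>
     (\<forall>g\<in>arr G. bij_betw (th g) (Xd (sinv G g)) (Xd g)) \<and>
     (\<forall>g\<in>arr G. \<forall>y\<in>Xd g. th (sinv G g) y = inv_into (Xd (sinv G g)) (th g) y) \<and>
     arr X = (\<Union>g\<in>arr G. Xd g) \<and>
     (\<forall>g h. composable G g h \<longrightarrow>
        (\<forall>x\<in>Xd (sinv G h). th h x \<in> Xd (sinv G g) \<longrightarrow>
           x \<in> Xd (sinv G (smul G g h)) \<and> th (smul G g h) x = th g (th h x))) \<and>
     (\<forall>g h. nat_le G g h \<longrightarrow> Xd g \<subseteq> Xd h)"

definition order_ideal :: "('x, 'xo) sgd \<Rightarrow> 'x set \<Rightarrow> bool" where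
  "order_ideal X Y \<longleftrightarrow> Y \<subseteq> arr X \<and> (\<forall>y\<in>Y. \<forall>x. nat_le X x y \<longrightarrow> x \<in> Y)"

definition ordered_partial_action ::
  "('g, 'go) sgd \<Rightarrow> ('x, 'xo) sgd \<Rightarrow> ('g \<Rightarrow> 'x set) \<Rightarrow> ('g \<Rightarrow> 'x \<Rightarrow> 'x) \<Rightarrow> bool" where
  "ordered_partial_action G X Xd th \<longleftrightarrow> partial_action G X Xd th \<and>
     (\<forall>g\<in>arr G. order_ideal X (Xd g) \<and>
        (\<forall>x\<in>Xd (sinv G g). \<forall>y\<in>Xd (sinv G g). nat_le X x y \<longleftrightarrow> nat_le X (th g x) (th g y)))"

definition semidirect ::
  "('g, 'go) sgd \<Rightarrow> ('x, 'xo) sgd \<Rightarrow> ('g \<Rightarrow> 'x set) \<Rightarrow> ('g \<Rightarrow> 'x \<Rightarrow> 'x) \<Rightarrow> ('g \<times> 'x, 'go \<times> 'xo) sgd" where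
  "semidirect G X Xd th =
     \<lparr> arr = {(g, x). g \<in> arr G \<and> x \<in> Xd (sinv G g)},
       obj = obj G \<times> obj X,
       sdom = (\<lambda>(g, x). (sdom G g, sdom X x)),
       scod = (\<lambda>(g, x). (scod G g, scod X (th g x))),
       smul = (\<lambda>(g, x) (h, y). (smul G g h, th (sinv G h) (smul X x (th h y)))) \<rparr>"

end

theory Submission
  imports Defs
begin

section \<open>Generic semigroupoid facts\<close>

lemma sg_mul:
  assumes "semigroupoid S" "composable S s t"
  shows "smul S s t \<in> arr S" "sdom S (smul S s t) = sdom S t" "scod S (smul S s t) = scod S s"
  using assms unfolding semigroupoid_def by blast+

lemma sg_assoc:
  assumes "semigroupoid S" "composable S s t" "composable S t u"
  shows "smul S (smul S s t) u = smul S s (smul S t u)"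
  using assms unfolding semigroupoid_def by blast

lemma inv_is:
  assumes "inverse_semigroupoid S" "s \<in> arr S"
  shows "is_inv S s (sinv S s)"
  using assms unfolding inverse_semigroupoid_def sinv_def by (metis theI')

lemma inv_uniq:
  assumes "inverse_semigroupoid S" "s \<in> arr S" "is_inv S s t"
  shows "t = sinv S s"
  using assms unfolding inverse_semigroupoid_def sinv_def by (metis the1_equality)

lemma is_inv_sym: "is_inv S s t \<Longrightarrow> s \<in> arr S \<Longrightarrow> is_inv S t s"
  unfolding is_inv_def by auto

lemma inv_facts:
  assumes "inverse_semigroupoid S" "s \<in> arr S"
  shows "sinv S s \<in> arr S" "sdom S (sinv S s) = scod S s" "scod S (sinv S s) = sdom S s"
    "smul S (smul S s (sinv S s)) s = s" "smul S (smul S (sinv S s) s) (sinv S s) = sinv S s"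
  using inv_is[OF assms] unfolding is_inv_def by auto

lemma inv_inv:
  assumes "inverse_semigroupoid S" "s \<in> arr S"
  shows "sinv S (sinv S s) = s"
  by (metis assms inv_facts(1) inv_is inv_uniq is_inv_sym)

locale gpd =
  fixes G :: "('g,'go) sgd"
  assumes gpd: "groupoid G"
begin

lemma isg: "inverse_semigroupoid G" using gpd unfolding groupoid_def by (rule conjunct1)
lemma sg: "semigroupoid G" using isg unfolding inverse_semigroupoid_def by (rule conjunct1)

lemmas m = sg_mul[OF sg]
lemmas asc = sg_assoc[OF sg]
lemmas iv = inv_facts[OF isg]
lemmas ii = inv_inv[OF isg]

lemma dom_obj: "g \<in> arr G \<Longrightarrow> sdom G g \<in> obj G"
  using sg unfolding semigroupoid_def by blast
lemma cod_obj: "g \<in> arr G \<Longrightarrow> scod G g \<in> obj G"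
  using sg unfolding semigroupoid_def by blast

lemma idem_ll:
  assumes "g \<in> arr G"
  shows "idem G (smul G (sinv G g) g)" "sdom G (smul G (sinv G g) g) = sdom G g"
proof -
  let ?i = "sinv G g"
  have c1: "composable G ?i g" using assms iv by (simp add: composable_def)
  have c2: "composable G (smul G ?i g) ?i" using assms iv m[OF c1] by (simp add: composable_def)
  have "smul G (smul G ?i g) (smul G ?i g) = smul G (smul G (smul G ?i g) ?i) g"
    using asc[OF c2 c1] by simp
  also have "\<dots> = smul G ?i g" using iv(5)[OF assms] by simp
  finally show "idem G (smul G ?i g)" using m[OF c1] iv[OF assms] unfolding idem_def by simp
  show "sdom G (smul G (sinv G g) g) = sdom G g" using m[OF c1] by simp
qed

lemma idem_uniq:
  assumes "idem G e" "idem G f" "sdom G e = sdom G f"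
  shows "e = f"
proof -
  have "sdom G e \<in> obj G" using assms(1) dom_obj unfolding idem_def by blast
  moreover have "\<forall>x\<in>obj G. \<exists>!e. idem G e \<and> sdom G e = x" using gpd unfolding groupoid_def by (rule conjunct2)
  ultimately have u: "\<exists>!e'. idem G e' \<and> sdom G e' = sdom G e" by (rule bspec[rotated])
  show ?thesis using u assms by (auto elim!: ex1E)
qed

lemma runit:
  assumes "composable G g e" "idem G e"
  shows "smul G g e = g"
proof -
  have g: "g \<in> arr G" using assms unfolding composable_def by blast
  have "sdom G e = sdom G g" using assms unfolding composable_def idem_def by simp
  then have "e = smul G (sinv G g) g"
    using idem_uniq[OF assms(2) idem_ll(1)[OF g]] idem_ll(2)[OF g] by simp
  moreover have "smul G g (smul G (sinv G g) g) = g"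
  proof -
    have c1: "composable G g (sinv G g)" "composable G (sinv G g) g"
      using iv(1,2,3)[OF g] g unfolding composable_def by auto
    have "smul G g (smul G (sinv G g) g) = smul G (smul G g (sinv G g)) g" using asc[OF c1] by simp
    also have "\<dots> = g" by (rule iv(4)[OF g])
    finally show ?thesis .
  qed
  ultimately show ?thesis by simp
qed

lemma lunit:
  assumes "composable G e g" "idem G e"
  shows "smul G e g = g"
proof -
  have g: "g \<in> arr G" using assms unfolding composable_def by blast
  have gi: "sinv G g \<in> arr G" using iv g by simp
  have "sdom G e = scod G g" using assms unfolding composable_def idem_def by simp
  then have "e = smul G g (sinv G g)"
    using idem_uniq[OF assms(2) idem_ll(1)[OF gi]] idem_ll(2)[OF gi] ii[OF g] iv(2)[OF g] by simp
  moreover have "smul G (smul G g (sinv G g)) g = g"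
    using iv[OF g] by simp
  ultimately show ?thesis by simp
qed

lemma idem_rr:
  assumes "g \<in> arr G"
  shows "idem G (smul G g (sinv G g))" "sdom G (smul G g (sinv G g)) = scod G g"
  using idem_ll[of "sinv G g"] iv[OF assms] ii[OF assms] by auto

lemma inv_uniqG: "g \<in> arr G \<Longrightarrow> is_inv G g h \<Longrightarrow> h = sinv G g"
  using inv_uniq[OF isg] by blast

lemma nat_le_eq: "nat_le G g h \<Longrightarrow> g = h"
  unfolding nat_le_def using runit by blast

lemma idem_inv: "idem G e \<Longrightarrow> sinv G e = e"
proof -
  assume "idem G e"
  then have "is_inv G e e" "e \<in> arr G" unfolding idem_def is_inv_def by auto
  then show ?thesis using inv_uniqG by metis
qed

lemma mul_inv:
  assumes c: "composable G g h"
  shows "sinv G (smul G g h) = smul G (sinv G h) (sinv G g)"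
proof -
  have g: "g \<in> arr G" and h: "h \<in> arr G" and gh: "sdom G g = scod G h" using c unfolding composable_def by auto
  note ig = iv[OF g] and ih = iv[OF h]
  have c2: "composable G (sinv G h) (sinv G g)" using ig ih gh by (simp add: composable_def)
  note mgh = m[OF c] and mi = m[OF c2]
  have chh: "composable G h (sinv G h)" using ih h by (simp add: composable_def)
  have chi: "composable G (sinv G h) h" using ih h by (simp add: composable_def)
  have cgg: "composable G g (sinv G g)" using ig g by (simp add: composable_def)
  have cig: "composable G (sinv G g) g" using ig g by (simp add: composable_def)
  have ch2: "composable G h (smul G (sinv G h) (sinv G g))" using mi ih h by (simp add: composable_def)
  have c2g: "composable G (smul G (sinv G h) (sinv G g)) g" using mi ig g gh by (simp add: composable_def)
  have cgi2: "composable G (sinv G g) (smul G g h)" using mgh ig g by (simp add: composable_def)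
  have chh_g: "composable G (smul G h (sinv G h)) (sinv G g)" using m[OF chh] ig ih gh by (simp add: composable_def)
  have cgg_h: "composable G (smul G (sinv G g) g) h" using m[OF cig] gh h by (simp add: composable_def)
  have e1: "smul G (smul G g h) (smul G (sinv G h) (sinv G g)) = smul G g (sinv G g)"
  proof -
    have "smul G (smul G g h) (smul G (sinv G h) (sinv G g)) = smul G g (smul G h (smul G (sinv G h) (sinv G g)))"
      by (rule asc[OF c ch2])
    also have "smul G h (smul G (sinv G h) (sinv G g)) = smul G (smul G h (sinv G h)) (sinv G g)"
      by (rule asc[OF chh c2, symmetric])
    also have "\<dots> = sinv G g" by (rule lunit[OF chh_g idem_rr(1)[OF h]])
    finally show ?thesis .
  qed
  have e2: "smul G (smul G (sinv G h) (sinv G g)) (smul G g h) = smul G (sinv G h) h"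
  proof -
    have "smul G (smul G (sinv G h) (sinv G g)) (smul G g h) = smul G (sinv G h) (smul G (sinv G g) (smul G g h))"
      using asc[OF c2 cgi2] .
    also have "smul G (sinv G g) (smul G g h) = smul G (smul G (sinv G g) g) h"
      by (rule asc[OF cig c, symmetric])
    also have "\<dots> = h" by (rule lunit[OF cgg_h idem_ll(1)[OF g]])
    finally show ?thesis .
  qed
  have cggg: "composable G (smul G g (sinv G g)) g" using m[OF cgg] ig g by (simp add: composable_def)
  have chhh: "composable G (smul G (sinv G h) h) (sinv G h)" using m[OF chi] ih h by (simp add: composable_def)
  have f1: "smul G (smul G g (sinv G g)) (smul G g h) = smul G g h"
  proof -
    have "smul G (smul G g (sinv G g)) (smul G g h) = smul G (smul G (smul G g (sinv G g)) g) h"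
      by (rule asc[OF cggg c, symmetric])
    also have "\<dots> = smul G g h" using ig(4) by simp
    finally show ?thesis .
  qed
  have f2: "smul G (smul G (sinv G h) h) (smul G (sinv G h) (sinv G g)) = smul G (sinv G h) (sinv G g)"
  proof -
    have "smul G (smul G (sinv G h) h) (smul G (sinv G h) (sinv G g)) = smul G (smul G (smul G (sinv G h) h) (sinv G h)) (sinv G g)"
      by (rule asc[OF chhh c2, symmetric])
    also have "\<dots> = smul G (sinv G h) (sinv G g)" using ih(5) by simp
    finally show ?thesis .
  qed
  have "is_inv G (smul G g h) (smul G (sinv G h) (sinv G g))"
    unfolding is_inv_def using e1 e2 f1 f2 mi mgh ih ig gh by simp
  then show ?thesis using inv_uniqG mgh by simp
qed

end


locale slat =
  fixes X :: "('x,'xo) sgd"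
  assumes slat: "semilatticeoid X"
begin

lemma isX: "inverse_semigroupoid X" using slat unfolding semilatticeoid_def by (rule conjunct1)
lemma sgX: "semigroupoid X" using isX unfolding inverse_semigroupoid_def by (rule conjunct1)

lemma ar_idem: "x \<in> arr X \<Longrightarrow> idem X x"
  using slat unfolding semilatticeoid_def by blast

lemma dc[simp]: "x \<in> arr X \<Longrightarrow> scod X x = sdom X x"
  using ar_idem unfolding idem_def by simp

lemma xx[simp]: "x \<in> arr X \<Longrightarrow> smul X x x = x"
  using ar_idem unfolding idem_def by simp

lemma comp_iff: "composable X x y \<longleftrightarrow> x \<in> arr X \<and> y \<in> arr X \<and> sdom X x = sdom X y"
  unfolding composable_def by auto

lemma mul_arr[simp]: "x \<in> arr X \<Longrightarrow> y \<in> arr X \<Longrightarrow> sdom X x = sdom X y \<Longrightarrow> smul X x y \<in> arr X"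
  using sg_mul[OF sgX] comp_iff by blast

lemma mul_dom[simp]: "x \<in> arr X \<Longrightarrow> y \<in> arr X \<Longrightarrow> sdom X x = sdom X y \<Longrightarrow> sdom X (smul X x y) = sdom X x"
  using sg_mul[OF sgX] comp_iff by metis

lemma massoc[simp]: "x \<in> arr X \<Longrightarrow> y \<in> arr X \<Longrightarrow> z \<in> arr X \<Longrightarrow> sdom X x = sdom X y \<Longrightarrow> sdom X y = sdom X z
  \<Longrightarrow> smul X (smul X x y) z = smul X x (smul X y z)"
  using sg_assoc[OF sgX] comp_iff by metis

lemma xxy[simp]: "x \<in> arr X \<Longrightarrow> y \<in> arr X \<Longrightarrow> sdom X x = sdom X y \<Longrightarrow> smul X x (smul X x y) = smul X x y"
proof -
  assume a: "x \<in> arr X" "y \<in> arr X" "sdom X x = sdom X y"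
  have "smul X x (smul X x y) = smul X (smul X x x) y" using massoc[of x x y] a by metis
  then show ?thesis using a by (metis xx)
qed

lemma xyxy[simp]: "x \<in> arr X \<Longrightarrow> y \<in> arr X \<Longrightarrow> sdom X x = sdom X y \<Longrightarrow> smul X x (smul X y (smul X x y)) = smul X x y"
proof -
  assume a: "x \<in> arr X" "y \<in> arr X" "sdom X x = sdom X y"
  have "smul X x (smul X y (smul X x y)) = smul X (smul X x y) (smul X x y)"
    using massoc[of x y "smul X x y"] a mul_arr mul_dom by metis
  then show ?thesis using a xx mul_arr by metis
qed

lemma comm: "x \<in> arr X \<Longrightarrow> y \<in> arr X \<Longrightarrow> sdom X x = sdom X y \<Longrightarrow> smul X x y = smul X y x"
proof -
  assume a: "x \<in> arr X" "y \<in> arr X" "sdom X x = sdom X y"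
  have "is_inv X (smul X x y) (smul X y x)" unfolding is_inv_def using a by simp
  moreover have "is_inv X (smul X x y) (smul X x y)" unfolding is_inv_def using a by simp
  ultimately show ?thesis using inv_uniq[OF isX] a mul_arr by metis
qed

lemma le_iff: "nat_le X a b \<longleftrightarrow> a \<in> arr X \<and> b \<in> arr X \<and> sdom X a = sdom X b \<and> smul X a b = a"
proof
  assume "nat_le X a b"
  then obtain e where e: "a \<in> arr X" "b \<in> arr X" "sdom X a = sdom X b" "idem X e" "composable X b e" and ae: "a = smul X b e"
    unfolding nat_le_def by blast
  have ee: "e \<in> arr X" "sdom X b = sdom X e" using e(5) unfolding comp_iff by auto
  have "smul X a b = smul X (smul X b e) b" using ae by simp
  also have "\<dots> = smul X b (smul X e b)" using massoc[of b e b] e ee by metis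
  also have "smul X e b = smul X b e" using comm ee e by metis
  also have "smul X b (smul X b e) = smul X b e" using xxy e ee by metis
  finally show "a \<in> arr X \<and> b \<in> arr X \<and> sdom X a = sdom X b \<and> smul X a b = a" using e ae by simp
next
  assume a: "a \<in> arr X \<and> b \<in> arr X \<and> sdom X a = sdom X b \<and> smul X a b = a"
  then have "a = smul X b a" using comm by metis
  moreover have "composable X b a" using a unfolding comp_iff by simp
  moreover have "idem X a" using a ar_idem by simp
  ultimately show "nat_le X a b" unfolding nat_le_def using a by auto
qed

lemma le_arr: "nat_le X a b \<Longrightarrow> a \<in> arr X" "nat_le X a b \<Longrightarrow> b \<in> arr X"
  "nat_le X a b \<Longrightarrow> sdom X a = sdom X b"
  using le_iff by auto

lemma le_refl: "a \<in> arr X \<Longrightarrow> nat_le X a a"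
  using le_iff by simp

lemma le_antisym: "nat_le X a b \<Longrightarrow> nat_le X b a \<Longrightarrow> a = b"
  using le_iff comm by metis

lemma le_trans: "nat_le X a b \<Longrightarrow> nat_le X b c \<Longrightarrow> nat_le X a c"
proof -
  assume ab: "nat_le X a b" and bc: "nat_le X b c"
  then have a: "a \<in> arr X" "b \<in> arr X" "c \<in> arr X" "sdom X a = sdom X b" "sdom X b = sdom X c"
    "smul X a b = a" "smul X b c = b" using le_iff by auto
  have "smul X a c = smul X (smul X a b) c" using a by simp
  also have "\<dots> = smul X a (smul X b c)" using massoc a by metis
  also have "\<dots> = a" using a by simp
  finally show ?thesis using a le_iff by simp
qed

lemma le_mul1: "x \<in> arr X \<Longrightarrow> y \<in> arr X \<Longrightarrow> sdom X x = sdom X y \<Longrightarrow> nat_le X (smul X x y) x"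
proof -
  assume a: "x \<in> arr X" "y \<in> arr X" "sdom X x = sdom X y"
  have "smul X (smul X x y) x = smul X x (smul X x y)" using comm a by (metis mul_arr mul_dom)
  then show ?thesis using a le_iff by simp
qed

lemma le_mul2: "x \<in> arr X \<Longrightarrow> y \<in> arr X \<Longrightarrow> sdom X x = sdom X y \<Longrightarrow> nat_le X (smul X x y) y"
  using le_mul1[of y x] comm by metis

lemma le_meet: "nat_le X c a \<Longrightarrow> nat_le X c b \<Longrightarrow> nat_le X c (smul X a b)"
proof -
  assume "nat_le X c a" "nat_le X c b"
  then have a: "a \<in> arr X" "b \<in> arr X" "c \<in> arr X" "sdom X c = sdom X a" "sdom X c = sdom X b"
    "smul X c a = c" "smul X c b = b \<or> True" "smul X c b = c" using le_iff by auto
  have "smul X c (smul X a b) = smul X (smul X c a) b" using a massoc by metis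
  then have "smul X c (smul X a b) = c" using a by simp
  then show ?thesis using a le_iff by simp
qed

lemma le_mul_iff: "nat_le X c (smul X a b) \<longleftrightarrow> nat_le X c a \<and> nat_le X c b"
  if "a \<in> arr X" "b \<in> arr X" "sdom X a = sdom X b"
  using le_meet le_trans le_mul1 le_mul2 that by blast

end


locale act = gpd G + slat X for G :: "('g,'go) sgd" and X :: "('x,'xo) sgd" +
  fixes Xd :: "'g \<Rightarrow> 'x set" and th :: "'g \<Rightarrow> 'x \<Rightarrow> 'x"
  assumes opa: "ordered_partial_action G X Xd th"
begin

lemma pa: "partial_action G X Xd th" using opa unfolding ordered_partial_action_def by (rule conjunct1)

lemma Xd_sub: "g \<in> arr G \<Longrightarrow> Xd g \<subseteq> arr X"
  using pa unfolding partial_action_def by blast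

lemma Xd_arr: "g \<in> arr G \<Longrightarrow> x \<in> Xd g \<Longrightarrow> x \<in> arr X"
  using Xd_sub by blast

lemma bij: "g \<in> arr G \<Longrightarrow> bij_betw (th g) (Xd (sinv G g)) (Xd g)"
  using pa unfolding partial_action_def by blast

lemma th_in: "g \<in> arr G \<Longrightarrow> x \<in> Xd (sinv G g) \<Longrightarrow> th g x \<in> Xd g"
  using bij bij_betwE by blast

lemma th_inv1: "g \<in> arr G \<Longrightarrow> x \<in> Xd (sinv G g) \<Longrightarrow> th (sinv G g) (th g x) = x"
proof -
  assume g: "g \<in> arr G" and x: "x \<in> Xd (sinv G g)"
  have "\<forall>g\<in>arr G. \<forall>y\<in>Xd g. th (sinv G g) y = inv_into (Xd (sinv G g)) (th g) y"
    using pa unfolding partial_action_def by blast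
  then have "th (sinv G g) (th g x) = inv_into (Xd (sinv G g)) (th g) (th g x)"
    using g x th_in by blast
  also have "\<dots> = x" using bij[OF g] x by (simp add: bij_betw_def)
  finally show ?thesis .
qed

lemma thi_in: "g \<in> arr G \<Longrightarrow> y \<in> Xd g \<Longrightarrow> th (sinv G g) y \<in> Xd (sinv G g)"
  using th_in[of "sinv G g" y] iv(1) ii by simp

lemma th_inv2: "g \<in> arr G \<Longrightarrow> y \<in> Xd g \<Longrightarrow> th g (th (sinv G g) y) = y"
  using th_inv1[of "sinv G g" y] iv(1) ii by simp

lemma ideal: "g \<in> arr G \<Longrightarrow> y \<in> Xd g \<Longrightarrow> nat_le X x y \<Longrightarrow> x \<in> Xd g"
  using opa unfolding ordered_partial_action_def order_ideal_def by blast

lemma ord: "g \<in> arr G \<Longrightarrow> x \<in> Xd (sinv G g) \<Longrightarrow> y \<in> Xd (sinv G g) \<Longrightarrow>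
   nat_le X x y \<longleftrightarrow> nat_le X (th g x) (th g y)"
  using opa unfolding ordered_partial_action_def by blast

lemma ordi: "g \<in> arr G \<Longrightarrow> x \<in> Xd g \<Longrightarrow> y \<in> Xd g \<Longrightarrow>
   nat_le X x y \<longleftrightarrow> nat_le X (th (sinv G g) x) (th (sinv G g) y)"
  using ord[of "sinv G g" x y] iv(1) ii by simp

lemma compax: "composable G g h \<Longrightarrow> x \<in> Xd (sinv G h) \<Longrightarrow> th h x \<in> Xd (sinv G g) \<Longrightarrow>
   x \<in> Xd (sinv G (smul G g h)) \<and> th (smul G g h) x = th g (th h x)"
  using pa unfolding partial_action_def by blast

lemma th_mul:
  assumes g: "g \<in> arr G" and x: "x \<in> Xd (sinv G g)" and y: "y \<in> Xd (sinv G g)" and d: "sdom X x = sdom X y"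
  shows "sdom X (th g x) = sdom X (th g y)" "th g (smul X x y) = smul X (th g x) (th g y)"
proof -
  have ig: "sinv G g \<in> arr G" using iv(1) g by simp
  have xa: "x \<in> arr X" "y \<in> arr X" using x y Xd_arr ig by auto
  have l1: "nat_le X (smul X x y) x" "nat_le X (smul X x y) y" using le_mul1 le_mul2 xa d by auto
  have xy: "smul X x y \<in> Xd (sinv G g)" using ideal[OF ig x l1(1)] .
  have t1: "nat_le X (th g (smul X x y)) (th g x)" "nat_le X (th g (smul X x y)) (th g y)"
    using ord[OF g xy x] ord[OF g xy y] l1 by auto
  show sd: "sdom X (th g x) = sdom X (th g y)" using t1 le_arr by metis
  have A: "nat_le X (th g (smul X x y)) (smul X (th g x) (th g y))" using le_meet t1 by blast
  have tx: "th g x \<in> Xd g" "th g y \<in> Xd g" using th_in g x y by auto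
  have txa: "th g x \<in> arr X" "th g y \<in> arr X" using tx Xd_arr g by auto
  let ?p = "smul X (th g x) (th g y)"
  have pl: "nat_le X ?p (th g x)" "nat_le X ?p (th g y)" using le_mul1 le_mul2 txa sd by auto
  have pin: "?p \<in> Xd g" using ideal[OF g tx(1) pl(1)] .
  have "nat_le X (th (sinv G g) ?p) x" "nat_le X (th (sinv G g) ?p) y"
    using ordi[OF g pin tx(1)] ordi[OF g pin tx(2)] pl th_inv1 g x y by auto
  then have "nat_le X (th (sinv G g) ?p) (smul X x y)" using le_meet by blast
  then have "nat_le X (th g (th (sinv G g) ?p)) (th g (smul X x y))"
    using ord[OF g _ xy] thi_in[OF g pin] by blast
  then have B: "nat_le X ?p (th g (smul X x y))" using th_inv2[OF g pin] by simp
  show "th g (smul X x y) = ?p" using le_antisym A B by blast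
qed

lemma thi_mul:
  assumes g: "g \<in> arr G" and x: "x \<in> Xd g" and y: "y \<in> Xd g" and d: "sdom X x = sdom X y"
  shows "sdom X (th (sinv G g) x) = sdom X (th (sinv G g) y)"
    "th (sinv G g) (smul X x y) = smul X (th (sinv G g) x) (th (sinv G g) y)"
  using th_mul[of "sinv G g" x y] iv(1) ii g x y d by auto

lemma th_idem:
  assumes e: "idem G e" and x: "x \<in> Xd e"
  shows "th e x = x"
proof -
  have ea: "e \<in> arr G" and ie: "sinv G e = e" using e idem_inv unfolding idem_def by auto
  have ce: "composable G e e" and ee: "smul G e e = e" using e unfolding idem_def composable_def by auto
  have x': "x \<in> Xd (sinv G e)" using x ie by simp
  have t: "th e x \<in> Xd (sinv G e)" using th_in[OF ea x'] ie by simp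
  have "th e x = th e (th e x)" using compax[OF ce x' t] ee by simp
  also have "\<dots> = x" using th_inv1[OF ea x'] ie by simp
  finally show ?thesis .
qed

end


section \<open>Semidirect product\<close>

context act
begin

abbreviation "SD \<equiv> semidirect G X Xd th"

lemma sd_arr[simp]: "(g,x) \<in> arr SD \<longleftrightarrow> g \<in> arr G \<and> x \<in> Xd (sinv G g)"
  unfolding semidirect_def by simp
lemma sd_dom[simp]: "sdom SD (g,x) = (sdom G g, sdom X x)"
  unfolding semidirect_def by simp
lemma sd_cod[simp]: "scod SD (g,x) = (scod G g, scod X (th g x))"
  unfolding semidirect_def by simp
lemma sd_mul[simp]: "smul SD (g,x) (h,y) = (smul G g h, th (sinv G h) (smul X x (th h y)))"
  unfolding semidirect_def by simp
lemma sd_obj: "obj SD = obj G \<times> obj X"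
  unfolding semidirect_def by simp

lemma Xdi_arr: "g \<in> arr G \<Longrightarrow> x \<in> Xd (sinv G g) \<Longrightarrow> x \<in> arr X"
  using Xd_arr iv(1) by blast

lemma th_arr: "g \<in> arr G \<Longrightarrow> x \<in> Xd (sinv G g) \<Longrightarrow> th g x \<in> arr X"
  using Xd_arr th_in by blast

lemma prod:
  assumes g: "g \<in> arr G" and x: "x \<in> Xd (sinv G g)" and h: "h \<in> arr G" and y: "y \<in> Xd (sinv G h)"
    and gh: "sdom G g = scod G h" and d: "sdom X x = sdom X (th h y)"
  defines "z \<equiv> smul X x (th h y)"
  defines "w \<equiv> th (sinv G h) z"
  shows "z \<in> Xd h" "z \<in> Xd (sinv G g)" "nat_le X z x" "nat_le X z (th h y)"
    "w \<in> Xd (sinv G h)" "nat_le X w y" "w \<in> Xd (sinv G (smul G g h))" "th (smul G g h) w = th g z"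
    "sdom X w = sdom X y" "sdom X (th g z) = sdom X (th g x)" "th h w = z"
proof -
  have xa: "x \<in> arr X" using Xdi_arr g x by blast
  have ty: "th h y \<in> Xd h" "th h y \<in> arr X" using th_in th_arr h y by auto
  show zx: "nat_le X z x" and zy: "nat_le X z (th h y)" unfolding z_def using le_mul1 le_mul2 xa ty d by auto
  show zh: "z \<in> Xd h" using ideal[OF h ty(1) zy] .
  show zg: "z \<in> Xd (sinv G g)" using ideal[OF iv(1)[OF g] x zx] .
  show wh: "w \<in> Xd (sinv G h)" unfolding w_def using thi_in[OF h zh] .
  have "nat_le X w (th (sinv G h) (th h y))" unfolding w_def using ordi[OF h zh ty(1)] zy by blast
  then show wy: "nat_le X w y" using th_inv1[OF h y] by simp
  show thw: "th h w = z" unfolding w_def using th_inv2[OF h zh] .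
  have c: "composable G g h" using g h gh unfolding composable_def by simp
  show "w \<in> Xd (sinv G (smul G g h))" "th (smul G g h) w = th g z"
    using compax[OF c wh] thw zg by auto
  show "sdom X w = sdom X y" using wy le_arr by blast
  have "nat_le X (th g z) (th g x)" using ord[OF g zg x] zx by blast
  then show "sdom X (th g z) = sdom X (th g x)" using le_arr by blast
qed

end


context act
begin

lemma sd_assoc:
  assumes g: "g \<in> arr G" and x: "x \<in> Xd (sinv G g)" and h: "h \<in> arr G" and y: "y \<in> Xd (sinv G h)"
    and k: "k \<in> arr G" and w: "w \<in> Xd (sinv G k)"
    and gh: "sdom G g = scod G h" and hk: "sdom G h = scod G k"
    and d1: "sdom X x = sdom X (th h y)" and d2: "sdom X y = sdom X (th k w)"
  shows "smul SD (smul SD (g,x) (h,y)) (k,w) = smul SD (g,x) (smul SD (h,y) (k,w))"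
proof -
  let ?z1 = "smul X x (th h y)"
  let ?p = "th (sinv G h) ?z1"
  let ?q = "smul X y (th k w)"
  let ?u = "th (sinv G k) ?q"
  note P1 = prod[OF g x h y gh d1]
  note P2 = prod[OF h y k w hk d2]
  have cgh: "composable G g h" and chk: "composable G h k" using g h k gh hk unfolding composable_def by auto
  have first: "smul G (smul G g h) k = smul G g (smul G h k)" using asc[OF cgh chk] .
  have ih: "sinv G h \<in> arr G" and ik: "sinv G k \<in> arr G" using iv(1) h k by auto
  have ya: "y \<in> arr X" using Xd_arr[OF ih y] .
  have pa: "?p \<in> arr X" using Xd_arr[OF ih P1(5)] .
  have tkw: "th k w \<in> arr X" using th_arr[OF k w] .
  have qa: "?q \<in> arr X" using ya tkw d2 by simp
  have py: "smul X ?p y = ?p" "sdom X ?p = sdom X y" using P1(6) le_iff by auto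
  have qy: "smul X ?q y = ?q" "sdom X ?q = sdom X y" using P2(3) le_iff by auto
  have yq: "smul X y ?q = ?q" using qy comm ya qa by metis
  have e1: "smul X ?p (th k w) = smul X ?p ?q"
  proof -
    have "smul X ?p (th k w) = smul X (smul X ?p y) (th k w)" using py by simp
    also have "\<dots> = smul X ?p ?q" using massoc[of ?p y "th k w"] pa ya tkw py d2 by simp
    finally show ?thesis .
  qed
  have pq_le: "nat_le X (smul X ?p ?q) ?p" "nat_le X (smul X ?p ?q) ?q"
    using le_mul1 le_mul2 pa qa py qy by auto
  have pqin: "smul X ?p ?q \<in> Xd (sinv G h)" using ideal[OF ih P1(5) pq_le(1)] .
  have TM: "sdom X (th h ?p) = sdom X (th h ?q)" "th h (smul X ?p ?q) = smul X (th h ?p) (th h ?q)"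
    using th_mul[OF h P1(5) P2(2)] py qy by auto
  have TM2: "sdom X (th h y) = sdom X (th h ?q)" "th h (smul X y ?q) = smul X (th h y) (th h ?q)"
    using th_mul[OF h y P2(2)] qy by auto
  have thq: "th h ?q \<in> Xd h" "th h ?q \<in> arr X" using th_in[OF h P2(2)] th_arr[OF h P2(2)] by auto
  have tha: "th h y \<in> arr X" using th_arr[OF h y] .
  have xa: "x \<in> arr X" using Xdi_arr[OF g x] .
  let ?r = "smul X x (th h ?q)"
  have "th h (smul X ?p ?q) = smul X ?z1 (th h ?q)" using TM P1(11) by simp
  also have "\<dots> = smul X x (smul X (th h y) (th h ?q))"
    using massoc[of x "th h y" "th h ?q"] xa tha thq d1 TM2 by simp
  also have "smul X (th h y) (th h ?q) = th h ?q" using TM2 yq by simp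
  finally have thpq: "th h (smul X ?p ?q) = ?r" .
  have pqr: "smul X ?p ?q = th (sinv G h) ?r" using th_inv1[OF h pqin] thpq by simp
  have rle: "nat_le X ?r (th h ?q)" using le_mul2 xa thq d1 TM2 by auto
  have rin: "?r \<in> Xd (sinv G (sinv G h))" using ideal[OF h thq(1) rle] ii h by simp
  have rin2: "th (sinv G h) ?r \<in> Xd (sinv G (sinv G k))" using ideal[OF k P2(1) pq_le(2)] pqr ii k by simp
  have cki: "composable G (sinv G k) (sinv G h)" using iv h k hk unfolding composable_def by auto
  have "th (sinv G (smul G h k)) ?r = th (sinv G k) (th (sinv G h) ?r)"
    using compax[OF cki rin rin2] mul_inv[OF chk] by simp
  moreover have "th (smul G h k) ?u = th h ?q" using P2(8) .
  ultimately show ?thesis using first e1 pqr by simp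
qed

end


context act
begin

lemma xobj: "x \<in> arr X \<Longrightarrow> sdom X x \<in> obj X"
  using sgX unfolding semigroupoid_def by blast

lemma sd_sg: "semigroupoid SD"
  unfolding semigroupoid_def
proof (intro conjI allI impI ballI)
  fix s assume "s \<in> arr SD"
  then obtain g x where s: "s = (g,x)" "g \<in> arr G" "x \<in> Xd (sinv G g)" by (cases s) auto
  show "sdom SD s \<in> obj SD" "scod SD s \<in> obj SD"
    using s dom_obj cod_obj xobj Xdi_arr th_arr sd_obj by auto
next
  fix s t assume c: "composable SD s t"
  obtain g x where s: "s = (g,x)" by (cases s)
  obtain h y where t: "t = (h,y)" by (cases t)
  have a: "g \<in> arr G" "x \<in> Xd (sinv G g)" "h \<in> arr G" "y \<in> Xd (sinv G h)"
     "sdom G g = scod G h" "sdom X x = scod X (th h y)"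
    using c s t unfolding composable_def by auto
  have d: "sdom X x = sdom X (th h y)" using a th_arr by simp
  note P = prod[OF a(1-5) d]
  have cgh: "composable G g h" using a unfolding composable_def by simp
  have tz: "th g (smul X x (th h y)) \<in> arr X" using th_arr[OF a(1) P(2)] .
  have tx: "th g x \<in> arr X" using th_arr[OF a(1,2)] .
  show "smul SD s t \<in> arr SD" using s t m(1)[OF cgh] P(7) by simp
  show "sdom SD (smul SD s t) = sdom SD t" using s t m(2)[OF cgh] P(9) by simp
  show "scod SD (smul SD s t) = scod SD s" using s t m(3)[OF cgh] P(8) P(10) tz tx by simp
next
  fix s t u assume c: "composable SD s t \<and> composable SD t u"
  obtain g x where s: "s = (g,x)" by (cases s)
  obtain h y where t: "t = (h,y)" by (cases t)
  obtain k w where u: "u = (k,w)" by (cases u)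
  have a: "g \<in> arr G" "x \<in> Xd (sinv G g)" "h \<in> arr G" "y \<in> Xd (sinv G h)" "k \<in> arr G" "w \<in> Xd (sinv G k)"
     "sdom G g = scod G h" "sdom G h = scod G k" "sdom X x = scod X (th h y)" "sdom X y = scod X (th k w)"
    using c s t u unfolding composable_def by auto
  have d: "sdom X x = sdom X (th h y)" "sdom X y = sdom X (th k w)" using a th_arr by auto
  show "smul SD (smul SD s t) u = smul SD s (smul SD t u)"
    using sd_assoc[OF a(1-8) d] s t u by simp
qed

lemma sd_inv:
  assumes g: "g \<in> arr G" and x: "x \<in> Xd (sinv G g)"
  shows "is_inv SD (g,x) (sinv G g, th g x)"
proof -
  have ig: "sinv G g \<in> arr G" using iv(1) g by simp
  have xa: "x \<in> arr X" using Xdi_arr g x by blast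
  have tx: "th g x \<in> Xd g" "th g x \<in> arr X" using th_in th_arr g x by auto
  have r1: "smul SD (g,x) (sinv G g, th g x) = (smul G g (sinv G g), th g x)"
    using th_inv1[OF g x] xa ii g by simp
  have r2: "smul SD (sinv G g, th g x) (g,x) = (smul G (sinv G g) g, x)"
    using th_inv1[OF g x] tx by simp
  show ?thesis unfolding is_inv_def
    using r1 r2 iv[OF g] ii[OF g] tx th_inv1[OF g x] xa ig g x by simp
qed

lemma sd_inv_uniq:
  assumes g: "g \<in> arr G" and x: "x \<in> Xd (sinv G g)" and inv: "is_inv SD (g,x) t"
  shows "t = (sinv G g, th g x)"
proof -
  obtain h y where t: "t = (h,y)" by (cases t)
  have a: "h \<in> arr G" "y \<in> Xd (sinv G h)" "sdom G g = scod G h" "sdom X x = scod X (th h y)"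
    "sdom G h = scod G g" "sdom X y = scod X (th g x)"
    "smul SD (smul SD (g,x) (h,y)) (g,x) = (g,x)" "smul SD (smul SD (h,y) (g,x)) (h,y) = (h,y)"
    using inv t unfolding is_inv_def by auto
  have "is_inv G g h" using a unfolding is_inv_def by auto
  then have hg: "h = sinv G g" using inv_uniqG g by blast
  have ig: "sinv G g \<in> arr G" using iv(1) g by simp
  have y: "y \<in> Xd g" using a(2) hg ii g by simp
  have xa: "x \<in> arr X" using Xdi_arr g x by blast
  have ya: "y \<in> arr X" using Xd_arr g y by blast
  have tx: "th g x \<in> Xd g" "th g x \<in> arr X" using th_in th_arr g x by auto
  have ty: "th (sinv G g) y \<in> Xd (sinv G g)" "th (sinv G g) y \<in> arr X" using thi_in[OF g y] Xd_arr ig by auto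
  have d1: "sdom X x = sdom X (th (sinv G g) y)" using a(4) hg ty by simp
  have d2: "sdom X y = sdom X (th g x)" using a(6) tx by simp
  let ?t = "th (sinv G g) y"
  have xt: "smul X x ?t \<in> Xd (sinv G g)" "nat_le X (smul X x ?t) x"
    using ideal[OF ig x] le_mul1 xa ty d1 by auto
  have xta: "smul X x ?t \<in> arr X" using xa ty d1 by simp
  have e1: "th (sinv G g) (smul X (th g (smul X x ?t)) (th g x)) = x"
    using a(7) hg ii g by simp
  have "smul X (th g (smul X x ?t)) (th g x) = th g (smul X (smul X x ?t) x)"
    using th_mul[OF g xt(1) x] xa xta ty d1 by simp
  also have "smul X (smul X x ?t) x = smul X x ?t" using xt(2) le_iff by simp
  finally have "x = smul X x ?t" using e1 th_inv1[OF g xt(1)] by simp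
  then have "nat_le X x ?t" using le_iff xa ty d1 by simp
  then have le1: "nat_le X (th g x) y" using ord[OF g x ty(1)] th_inv2[OF g y] by simp
  have yx: "smul X y (th g x) \<in> Xd g" "nat_le X (smul X y (th g x)) y"
    using ideal[OF g y] le_mul1 ya tx d2 by auto
  have yxa: "smul X y (th g x) \<in> arr X" using ya tx d2 by simp
  have e2: "th g (smul X (th (sinv G g) (smul X y (th g x))) (th (sinv G g) y)) = y"
    using a(8) hg ii g th_inv1[OF g x] by simp
  have "smul X (th (sinv G g) (smul X y (th g x))) (th (sinv G g) y) = th (sinv G g) (smul X (smul X y (th g x)) y)"
    using thi_mul[OF g yx(1) y] ya yxa tx d2 by simp
  also have "smul X (smul X y (th g x)) y = smul X y (th g x)" using yx(2) le_iff by simp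
  finally have "y = smul X y (th g x)" using e2 th_inv2[OF g yx(1)] by simp
  then have le2: "nat_le X y (th g x)" using le_iff ya tx d2 by simp
  have "y = th g x" using le_antisym le1 le2 by blast
  then show ?thesis using t hg by simp
qed

lemma sd_isg: "inverse_semigroupoid SD"
  unfolding inverse_semigroupoid_def
proof (intro conjI ballI sd_sg)
  fix s assume "s \<in> arr SD"
  then obtain g x where s: "s = (g,x)" "g \<in> arr G" "x \<in> Xd (sinv G g)" by (cases s) auto
  show "\<exists>!t. is_inv SD s t"
    using sd_inv[OF s(2,3)] sd_inv_uniq[OF s(2,3)] s(1) by blast
qed

lemma le_fst:
  assumes "nat_le SD r s"
  shows "fst r = fst s"
proof -
  obtain f where f: "s \<in> arr SD" "idem SD f" "composable SD s f" "r = smul SD s f"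
    using assms unfolding nat_le_def by blast
  obtain g x where s: "s = (g,x)" by (cases s)
  obtain k w where fk: "f = (k,w)" by (cases f)
  have k: "k \<in> arr G" "sdom G k = scod G k" "smul G k k = k"
    using f(2) fk unfolding idem_def by auto
  have ik: "idem G k" using k unfolding idem_def by simp
  have c: "composable G g k" using f(3) s fk unfolding composable_def by auto
  show ?thesis using f(4) s fk runit[OF c ik] by simp
qed

lemma sd_Eu: "E_unitary SD"
  unfolding E_unitary_def
proof (intro allI impI)
  fix s e assume a: "s \<in> arr SD \<and> idem SD e \<and> sigma_rel SD s e"
  then obtain r where r: "nat_le SD r s" "nat_le SD r e" unfolding sigma_rel_def by blast
  have fs: "fst s = fst e" using le_fst r by metis
  obtain g x where s: "s = (g,x)" by (cases s)
  obtain k w where ek: "e = (k,w)" by (cases e)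
  have k: "k \<in> arr G" "sdom G k = scod G k" "smul G k k = k"
    using a ek unfolding idem_def by auto
  have gk: "g = k" using fs s ek by simp
  have ig: "idem G g" using k gk unfolding idem_def by simp
  have sg': "g \<in> arr G" "x \<in> Xd (sinv G g)" using a s by auto
  have ii': "sinv G g = g" using idem_inv[OF ig] .
  have xg: "x \<in> Xd g" using sg' ii' by simp
  have dc': "sdom SD s = scod SD s"
    using r a unfolding nat_le_def idem_def by metis
  have xa: "x \<in> arr X" using Xd_arr sg'(1) xg by blast
  have "smul SD s s = s" using s th_idem[OF ig xg] ii' xa k gk by simp
  then show "idem SD s" using a dc' unfolding idem_def by simp
qed

end

theorem mainTheorem11:
  assumes "groupoid G"
    and "semilatticeoid X"
    and "ordered_partial_action G X Xd th"
  shows "inverse_semigroupoid (semidirect G X Xd th) \<and> E_unitary (semidirect G X Xd th)"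
proof -
  interpret act G X Xd th
    using assms by (unfold_locales) auto
  show ?thesis using sd_isg sd_Eu by simp
qed

end
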